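(* A category $S$ is left cancellative (resp., right cancellative) if and only if its universal monoid $\mathrm{U_{mon}}(S)$ is left cancellative (resp., right cancellative). Moreover, $S$ is a groupoid if and only if $\mathrm{U_{mon}}(S)$ is a group.
   Context: Categories are arrow-only: a set $S$ with partial associative multiplication, identities $\mathrm{Id}\,S$, source/target identities. $S$ is left (right) cancellative if $ax=ay\Rightarrow x=y$ (resp. $xa=ya\Rightarrow x=y$) for all $a,x,y$; a groupoid is a category in which every element has a two-sided inverse. $\mathrm{U_{mon}}(S)$ is the monoid presented by generators $\varepsilon_S(x)$ ($x\in S$) and relations $\varepsilon_S(e)=1$ ($e\in\mathrm{Id}\,S$), $\varepsilon_S(x)\varepsilon_S(y)=\varepsilon_S(xy)$ whenever $xy$ is defined. *)

theory Defs
  imports "HOL-Algebra.Group"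
begin

text \<open>Arrow-only category: carrier S, source and target identity maps src, tgt,
  and composition m; the product x y is defined iff tgt x = src y.\<close>

definition cat_defined :: "('a \<Rightarrow> 'a) \<Rightarrow> ('a \<Rightarrow> 'a) \<Rightarrow> 'a \<Rightarrow> 'a \<Rightarrow> bool" where
  "cat_defined src tgt x y \<longleftrightarrow> tgt x = src y"

definition category :: "'a set \<Rightarrow> ('a \<Rightarrow> 'a) \<Rightarrow> ('a \<Rightarrow> 'a) \<Rightarrow> ('a \<Rightarrow> 'a \<Rightarrow> 'a) \<Rightarrow> bool" where
  "category S src tgt m \<longleftrightarrow>
     (\<forall>x\<in>S. src x \<in> S \<and> tgt x \<in> S) \<and>
     (\<forall>x\<in>S. src (src x) = src x \<and> tgt (src x) = src x \<and>
             src (tgt x) = tgt x \<and> tgt (tgt x) = tgt x) \<and>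
     (\<forall>x\<in>S. m (src x) x = x \<and> m x (tgt x) = x) \<and>
     (\<forall>x\<in>S. \<forall>y\<in>S. tgt x = src y \<longrightarrow>
          m x y \<in> S \<and> src (m x y) = src x \<and> tgt (m x y) = tgt y) \<and>
     (\<forall>x\<in>S. \<forall>y\<in>S. \<forall>z\<in>S. tgt x = src y \<longrightarrow> tgt y = src z \<longrightarrow>
          m (m x y) z = m x (m y z))"

definition cat_ids :: "'a set \<Rightarrow> ('a \<Rightarrow> 'a) \<Rightarrow> 'a set" where
  "cat_ids S src = {e \<in> S. src e = e}"

definition cat_left_cancellative ::
  "'a set \<Rightarrow> ('a \<Rightarrow> 'a) \<Rightarrow> ('a \<Rightarrow> 'a) \<Rightarrow> ('a \<Rightarrow> 'a \<Rightarrow> 'a) \<Rightarrow> bool" where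
  "cat_left_cancellative S src tgt m \<longleftrightarrow>
     (\<forall>a\<in>S. \<forall>x\<in>S. \<forall>y\<in>S. cat_defined src tgt a x \<longrightarrow> cat_defined src tgt a y \<longrightarrow>
        m a x = m a y \<longrightarrow> x = y)"

definition cat_right_cancellative ::
  "'a set \<Rightarrow> ('a \<Rightarrow> 'a) \<Rightarrow> ('a \<Rightarrow> 'a) \<Rightarrow> ('a \<Rightarrow> 'a \<Rightarrow> 'a) \<Rightarrow> bool" where
  "cat_right_cancellative S src tgt m \<longleftrightarrow>
     (\<forall>a\<in>S. \<forall>x\<in>S. \<forall>y\<in>S. cat_defined src tgt x a \<longrightarrow> cat_defined src tgt y a \<longrightarrow>
        m x a = m y a \<longrightarrow> x = y)"

definition groupoid ::
  "'a set \<Rightarrow> ('a \<Rightarrow> 'a) \<Rightarrow> ('a \<Rightarrow> 'a) \<Rightarrow> ('a \<Rightarrow> 'a \<Rightarrow> 'a) \<Rightarrow> bool" where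
  "groupoid S src tgt m \<longleftrightarrow> category S src tgt m \<and>
     (\<forall>x\<in>S. \<exists>y\<in>S. cat_defined src tgt x y \<and> cat_defined src tgt y x \<and>
        m x y = src x \<and> m y x = tgt x)"

text \<open>The congruence on the free monoid (words = lists over S) generated by the
  defining relations of U_mon(S): e = 1 for identities e, and x y = (xy) when defined.\<close>

inductive umon_eq ::
  "'a set \<Rightarrow> ('a \<Rightarrow> 'a) \<Rightarrow> ('a \<Rightarrow> 'a) \<Rightarrow> ('a \<Rightarrow> 'a \<Rightarrow> 'a) \<Rightarrow> 'a list \<Rightarrow> 'a list \<Rightarrow> bool"
  for S src tgt m where
  refl: "u \<in> lists S \<Longrightarrow> umon_eq S src tgt m u u"
| sym: "umon_eq S src tgt m u v \<Longrightarrow> umon_eq S src tgt m v u"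
| trans: "umon_eq S src tgt m u v \<Longrightarrow> umon_eq S src tgt m v w \<Longrightarrow> umon_eq S src tgt m u w"
| ident: "p \<in> lists S \<Longrightarrow> q \<in> lists S \<Longrightarrow> e \<in> cat_ids S src \<Longrightarrow>
          umon_eq S src tgt m (p @ [e] @ q) (p @ q)"
| mult: "p \<in> lists S \<Longrightarrow> q \<in> lists S \<Longrightarrow> x \<in> S \<Longrightarrow> y \<in> S \<Longrightarrow> cat_defined src tgt x y \<Longrightarrow>
          umon_eq S src tgt m (p @ [x, y] @ q) (p @ [m x y] @ q)"

definition umon_rel ::
  "'a set \<Rightarrow> ('a \<Rightarrow> 'a) \<Rightarrow> ('a \<Rightarrow> 'a) \<Rightarrow> ('a \<Rightarrow> 'a \<Rightarrow> 'a) \<Rightarrow> ('a list \<times> 'a list) set" where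
  "umon_rel S src tgt m = {(u, v). umon_eq S src tgt m u v}"

text \<open>The universal monoid U_mon(S): the quotient of the free monoid on S by that congruence;
  the element epsilon_S(x) is the class of the one-letter word [x].\<close>
definition Umon ::
  "'a set \<Rightarrow> ('a \<Rightarrow> 'a) \<Rightarrow> ('a \<Rightarrow> 'a) \<Rightarrow> ('a \<Rightarrow> 'a \<Rightarrow> 'a) \<Rightarrow> 'a list set monoid" where
  "Umon S src tgt m =
    \<lparr> carrier = lists S // umon_rel S src tgt m,
      mult = (\<lambda>A B. umon_rel S src tgt m `` {(SOME u. u \<in> A) @ (SOME v. v \<in> B)}),
      one = umon_rel S src tgt m `` {[]} \<rparr>"

definition monoid_left_cancellative :: "('b, 'c) monoid_scheme \<Rightarrow> bool" where
  "monoid_left_cancellative M \<longleftrightarrow>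
     (\<forall>a\<in>carrier M. \<forall>x\<in>carrier M. \<forall>y\<in>carrier M. a \<otimes>\<^bsub>M\<^esub> x = a \<otimes>\<^bsub>M\<^esub> y \<longrightarrow> x = y)"

definition monoid_right_cancellative :: "('b, 'c) monoid_scheme \<Rightarrow> bool" where
  "monoid_right_cancellative M \<longleftrightarrow>
     (\<forall>a\<in>carrier M. \<forall>x\<in>carrier M. \<forall>y\<in>carrier M. x \<otimes>\<^bsub>M\<^esub> a = y \<otimes>\<^bsub>M\<^esub> a \<longrightarrow> x = y)"

end

theory Submission
  imports Defs
begin

definition push :: "('a \<Rightarrow> 'a) \<Rightarrow> ('a \<Rightarrow> 'a) \<Rightarrow> ('a \<Rightarrow> 'a \<Rightarrow> 'a) \<Rightarrow> 'a \<Rightarrow> 'a list \<Rightarrow> 'a list" where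
 "push src tgt m x v = (if src x = x then v else (case v of [] \<Rightarrow> [x]
    | z # v' \<Rightarrow> if tgt x = src z then (if src (m x z) = m x z then v' else m x z # v') else x # v))"

fun normal :: "'a set \<Rightarrow> ('a \<Rightarrow> 'a) \<Rightarrow> ('a \<Rightarrow> 'a) \<Rightarrow> 'a list \<Rightarrow> bool" where
  "normal S src tgt [] = True"
| "normal S src tgt [x] = (x \<in> S \<and> src x \<noteq> x)"
| "normal S src tgt (x # y # v) = (x \<in> S \<and> src x \<noteq> x \<and> tgt x \<noteq> src y \<and> normal S src tgt (y # v))"

lemma normal_tl: "normal S src tgt (x # v) \<Longrightarrow> normal S src tgt v"
  by (cases v) auto

definition nf where "nf src tgt m w = foldr (push src tgt m) w []"

context
  fixes S src tgt m
  assumes cat: "category S src tgt m"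
begin

lemma src_S: "x \<in> S \<Longrightarrow> src x \<in> S" and tgt_S: "x \<in> S \<Longrightarrow> tgt x \<in> S"
  using cat unfolding category_def by auto
lemma ss: "x \<in> S \<Longrightarrow> src (src x) = src x" and ts: "x \<in> S \<Longrightarrow> tgt (src x) = src x"
  and st: "x \<in> S \<Longrightarrow> src (tgt x) = tgt x" and tt: "x \<in> S \<Longrightarrow> tgt (tgt x) = tgt x"
  using cat unfolding category_def by auto
lemma lid: "x \<in> S \<Longrightarrow> m (src x) x = x" and rid: "x \<in> S \<Longrightarrow> m x (tgt x) = x"
  using cat unfolding category_def by auto
lemma mS: "x \<in> S \<Longrightarrow> y \<in> S \<Longrightarrow> tgt x = src y \<Longrightarrow> m x y \<in> S"
  and msrc: "x \<in> S \<Longrightarrow> y \<in> S \<Longrightarrow> tgt x = src y \<Longrightarrow> src (m x y) = src x"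
  and mtgt: "x \<in> S \<Longrightarrow> y \<in> S \<Longrightarrow> tgt x = src y \<Longrightarrow> tgt (m x y) = tgt y"
  using cat unfolding category_def by auto
lemma assoc: "x \<in> S \<Longrightarrow> y \<in> S \<Longrightarrow> z \<in> S \<Longrightarrow> tgt x = src y \<Longrightarrow> tgt y = src z \<Longrightarrow> m (m x y) z = m x (m y z)"
  using cat unfolding category_def by auto
lemma id_tgt: "e \<in> S \<Longrightarrow> src e = e \<Longrightarrow> tgt e = e"
  by (metis ts)
lemma id_l: "e \<in> S \<Longrightarrow> src e = e \<Longrightarrow> y \<in> S \<Longrightarrow> tgt e = src y \<Longrightarrow> m e y = y"
  by (metis id_tgt lid)
lemma id_r: "e \<in> S \<Longrightarrow> src e = e \<Longrightarrow> x \<in> S \<Longrightarrow> tgt x = src e \<Longrightarrow> m x e = x"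
  by (metis rid)

lemma push_normal: "x \<in> S \<Longrightarrow> normal S src tgt v \<Longrightarrow> normal S src tgt (push src tgt m x v)"
proof (cases v)
  case Nil
  assume "x \<in> S" "normal S src tgt v" then show ?thesis using Nil by (simp add: push_def)
next
  case (Cons z v')
  assume x: "x \<in> S" and n: "normal S src tgt v"
  have z: "z \<in> S" "src z \<noteq> z" using n Cons by (cases v'; simp)+
  have n': "normal S src tgt v'" using n Cons normal_tl by simp
  show ?thesis
  proof (cases "src x = x")
    case True then show ?thesis using n by (simp add: push_def)
  next
    case False
    show ?thesis
    proof (cases "tgt x = src z")
      case c: True
      show ?thesis
      proof (cases "src (m x z) = m x z")
        case True then show ?thesis using False c n' Cons by (simp add: push_def)
      next
        case nid: False
        have "normal S src tgt (m x z # v')"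
          using n Cons x z c nid mS[OF x z(1) c] mtgt[OF x z(1) c] by (cases v') auto
        then show ?thesis using False c nid Cons by (simp add: push_def)
      qed
    next
      case False
      then show ?thesis using \<open>src x \<noteq> x\<close> n Cons x by (simp add: push_def)
    qed
  qed
qed


lemma normal_hd: "normal S src tgt (z # v') \<Longrightarrow> z \<in> S \<and> src z \<noteq> z"
  by (cases v') auto
lemma normal_2: "normal S src tgt (z # w # v') \<Longrightarrow> tgt z \<noteq> src w"
  by simp

lemma push_id: "src x = x \<Longrightarrow> push src tgt m x v = v"
  by (simp add: push_def)

lemma push_nid: "src x \<noteq> x \<Longrightarrow> normal S src tgt v \<Longrightarrow> (\<forall>z v'. v = z # v' \<longrightarrow> tgt x \<noteq> src z) \<Longrightarrow>
   push src tgt m x v = x # v"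
  by (cases v) (auto simp: push_def)

lemma push_comp:
  assumes x: "x \<in> S" and y: "y \<in> S" and c: "tgt x = src y" and n: "normal S src tgt v"
  shows "push src tgt m x (push src tgt m y v) = push src tgt m (m x y) v"
proof (cases "src y = y")
  case True
  then have "m x y = x" using id_r[OF y True x] c by simp
  then show ?thesis using True by (simp add: push_id)
next
  case yn: False
  show ?thesis
  proof (cases "src x = x")
    case True
    then have "m x y = y" using id_l[OF x True y] c by simp
    then show ?thesis using True by (simp add: push_id)
  next
    case xn: False
    have xyS: "m x y \<in> S" and sxy: "src (m x y) = src x" and txy: "tgt (m x y) = tgt y"
      using mS[OF x y c] msrc[OF x y c] mtgt[OF x y c] by auto
    show ?thesis
    proof (cases v)
      case Nil
      then show ?thesis using xn yn c by (simp add: push_def)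
    next
      case (Cons z v')
      have z: "z \<in> S" "src z \<noteq> z" using normal_hd n Cons by auto
      have n': "normal S src tgt v'" using n Cons by (simp add: normal_tl)
      show ?thesis
      proof (cases "tgt y = src z")
        case cyz: True
        have yzS: "m y z \<in> S" and syz: "src (m y z) = src y" and tyz: "tgt (m y z) = tgt z"
          using mS[OF y z(1) cyz] msrc[OF y z(1) cyz] mtgt[OF y z(1) cyz] by auto
        have as: "m (m x y) z = m x (m y z)" using assoc[OF x y z(1) c cyz] .
        show ?thesis
        proof (cases "src (m y z) = m y z")
          case yzid: True
          have lhs: "push src tgt m y v = v'" using yn cyz yzid Cons by (simp add: push_def)
          show ?thesis
          proof (cases "src (m x y) = m x y")
            case xyid: True
            have "m x (m y z) = x" using yzid syz c id_r[OF yzS yzid x] by simp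
            moreover have "m (m x y) z = z" using id_l[OF xyS xyid z(1)] txy cyz by simp
            ultimately have "x = z" using as by simp
            then have "push src tgt m x v' = x # v'"
              using push_nid[OF xn n'] n Cons by (cases v') auto
            then show ?thesis using lhs xyid Cons \<open>x = z\<close> by (simp add: push_id)
          next
            case xyn: False
            have "m (m x y) z = x" using as yzid syz c id_r[OF yzS yzid x] by simp
            then have tz: "tgt x = tgt z" using mtgt[OF xyS z(1)] txy cyz by simp
            have "push src tgt m x v' = x # v'"
              using push_nid[OF xn n'] n Cons tz by (cases v') auto
            moreover have "push src tgt m (m x y) v = x # v'"
              using xyn txy cyz Cons \<open>m (m x y) z = x\<close> xn by (simp add: push_def)
            ultimately show ?thesis using lhs by simp
          qed
        next
          case yzn: False
          have lhs: "push src tgt m y v = m y z # v'" using yn cyz yzn Cons by (simp add: push_def)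
          show ?thesis
          proof (cases "src (m x y) = m x y")
            case xyid: True
            have "m (m x y) z = z" using id_l[OF xyS xyid z(1)] txy cyz by simp
            then show ?thesis using lhs xn c syz as xyid z Cons by (simp add: push_def)
          next
            case xyn: False
            show ?thesis using lhs xn c syz as xyn txy cyz Cons by (simp add: push_def)
          qed
        qed
      next
        case nyz: False
        have lhs: "push src tgt m y v = y # v" using yn nyz Cons by (simp add: push_def)
        show ?thesis using lhs xn c nyz txy Cons by (simp add: push_def)
      qed
    qed
  qed
qed

lemma nf_normal: "w \<in> lists S \<Longrightarrow> normal S src tgt (nf src tgt m w)"
  by (induction w) (auto simp: nf_def intro: push_normal)

lemma nf_append: "nf src tgt m (p @ q) = foldr (push src tgt m) p (nf src tgt m q)"
  by (simp add: nf_def)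

lemma nf_Cons: "nf src tgt m (x # q) = push src tgt m x (nf src tgt m q)"
  by (simp add: nf_def)

lemma umon_eq_lists: "umon_eq S src tgt m u v \<Longrightarrow> u \<in> lists S \<and> v \<in> lists S"
  by (induction rule: umon_eq.induct) (auto simp: cat_ids_def cat_defined_def intro: mS)

lemma umon_eq_nf: "umon_eq S src tgt m u v \<Longrightarrow> nf src tgt m u = nf src tgt m v"
proof (induction rule: umon_eq.induct)
  case (ident p q e)
  then show ?case by (simp add: nf_append nf_Cons cat_ids_def push_id)
next
  case (mult p q x y)
  have "normal S src tgt (nf src tgt m q)" using mult nf_normal by blast
  then show ?case using mult push_comp[of x y] by (simp add: nf_append nf_Cons cat_defined_def)
qed auto

lemma umon_eq_cong: "umon_eq S src tgt m u v \<Longrightarrow> p \<in> lists S \<Longrightarrow> q \<in> lists S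
   \<Longrightarrow> umon_eq S src tgt m (p @ u @ q) (p @ v @ q)"
proof (induction rule: umon_eq.induct)
  case (refl u) then show ?case by (intro umon_eq.refl) auto
next
  case (sym u v) then show ?case by (auto intro: umon_eq.sym)
next
  case (trans u v w) then show ?case by (meson umon_eq.trans)
next
  case (ident p' q' e)
  have "umon_eq S src tgt m ((p @ p') @ [e] @ (q' @ q)) ((p @ p') @ (q' @ q))"
    using ident by (intro umon_eq.ident) auto
  then show ?case by simp
next
  case (mult p' q' x y)
  have "umon_eq S src tgt m ((p @ p') @ [x, y] @ (q' @ q)) ((p @ p') @ [m x y] @ (q' @ q))"
    using mult by (intro umon_eq.mult) auto
  then show ?case by simp
qed

lemma push_eq: "x \<in> S \<Longrightarrow> normal S src tgt v \<Longrightarrow> v \<in> lists S \<Longrightarrow>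
   umon_eq S src tgt m (x # v) (push src tgt m x v)"
proof (cases "src x = x")
  case True
  assume "x \<in> S" "v \<in> lists S"
  then have "umon_eq S src tgt m ([] @ [x] @ v) ([] @ v)"
    using True by (intro umon_eq.ident) (auto simp: cat_ids_def)
  then show ?thesis using True by (simp add: push_id)
next
  case xn: False
  assume x: "x \<in> S" and n: "normal S src tgt v" and vS: "v \<in> lists S"
  show ?thesis
  proof (cases v)
    case Nil then show ?thesis using xn x by (simp add: push_def umon_eq.refl)
  next
    case (Cons z v')
    show ?thesis
    proof (cases "tgt x = src z")
      case c: True
      have 1: "umon_eq S src tgt m ([] @ [x, z] @ v') ([] @ [m x z] @ v')"
        using c x vS Cons by (intro umon_eq.mult) (auto simp: cat_defined_def)
      show ?thesis
      proof (cases "src (m x z) = m x z")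
        case True
        have "umon_eq S src tgt m ([] @ [m x z] @ v') ([] @ v')"
          using True x vS Cons c by (intro umon_eq.ident) (auto simp: cat_ids_def intro: mS)
        then show ?thesis using 1 True xn c Cons by (auto simp: push_def intro: umon_eq.trans)
      next
        case False
        then show ?thesis using 1 xn c Cons by (auto simp: push_def)
      qed
    next
      case False
      have "umon_eq S src tgt m (x # v) (x # v)" using x vS by (intro umon_eq.refl) auto
      then show ?thesis using False xn Cons by (simp add: push_def)
    qed
  qed
qed

lemma to_nf: "u \<in> lists S \<Longrightarrow> umon_eq S src tgt m u (nf src tgt m u)"
proof (induction u)
  case Nil then show ?case by (simp add: nf_def umon_eq.refl)
next
  case (Cons x w)
  then have 1: "umon_eq S src tgt m ([x] @ w @ []) ([x] @ nf src tgt m w @ [])"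
    by (intro umon_eq_cong) auto
  have "nf src tgt m w \<in> lists S" using umon_eq_lists Cons by auto
  then have "umon_eq S src tgt m (x # nf src tgt m w) (push src tgt m x (nf src tgt m w))"
    using Cons nf_normal by (intro push_eq) auto
  then show ?case using 1 by (auto simp: nf_def intro: umon_eq.trans)
qed

lemma umon_eq_iff: "u \<in> lists S \<Longrightarrow> v \<in> lists S \<Longrightarrow>
   umon_eq S src tgt m u v \<longleftrightarrow> nf src tgt m u = nf src tgt m v"
  by (metis to_nf umon_eq_nf umon_eq.sym umon_eq.trans)

lemma push_cases:
  assumes xn: "src x \<noteq> x" and x: "x \<in> S" and n: "normal S src tgt v"
  obtains (D) "push src tgt m x v = x # v" "\<forall>z v'. v = z # v' \<longrightarrow> tgt x \<noteq> src z"
  | (B) z v' where "v = z # v'" "tgt x = src z" "m x z = src x" "push src tgt m x v = v'"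
  | (C) z v' where "v = z # v'" "tgt x = src z" "src (m x z) \<noteq> m x z" "push src tgt m x v = m x z # v'"
proof (cases v)
  case Nil then show ?thesis using D xn by (simp add: push_def)
next
  case (Cons z v')
  have z: "z \<in> S" using n Cons normal_hd by blast
  show ?thesis
  proof (cases "tgt x = src z")
    case c: True
    show ?thesis
    proof (cases "src (m x z) = m x z")
      case True
      then have "m x z = src x" using msrc[OF x z c] by simp
      then show ?thesis using B[OF Cons c] xn c True Cons by (simp add: push_def)
    next
      case False then show ?thesis using C[OF Cons c] xn c Cons by (simp add: push_def)
    qed
  next
    case False then show ?thesis using D xn Cons by (simp add: push_def)
  qed
qed

lemma push_inj:
  assumes lc: "cat_left_cancellative S src tgt m" and x: "x \<in> S"
    and nv: "normal S src tgt v" and nw: "normal S src tgt w"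
    and eq: "push src tgt m x v = push src tgt m x w"
  shows "v = w"
proof (cases "src x = x")
  case True then show ?thesis using eq by (simp add: push_id)
next
  case xn: False
  have canc: "\<And>a b. a \<in> S \<Longrightarrow> b \<in> S \<Longrightarrow> tgt x = src a \<Longrightarrow> tgt x = src b \<Longrightarrow> m x a = m x b \<Longrightarrow> a = b"
    using lc x unfolding cat_left_cancellative_def cat_defined_def by blast
  have F1: False if "z \<in> S" "tgt x = src z" "m x z = x" "src z \<noteq> z" for z
  proof -
    have "z = tgt x" using canc[OF that(1) tgt_S[OF x] that(2)] st[OF x] rid[OF x] that(3) by simp
    then show False using that(4) st[OF x] by simp
  qed
  have F2: False if "normal S src tgt (z # x # u)" "tgt x = src z" "m x z = src x" for z u
  proof -
    have z: "z \<in> S" using that(1) by simp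
    have "tgt z = src x" using mtgt[OF x z that(2)] that(3) ts[OF x] by simp
    then show False using that(1) by simp
  qed
  have F3: False if "normal S src tgt (z # m x z' # u)" "tgt x = src z" "m x z = src x"
      "tgt x = src z'" "z' \<in> S" for z z' u
  proof -
    have z: "z \<in> S" using that(1) by simp
    have "tgt z = src x" using mtgt[OF x z that(2)] that(3) ts[OF x] by simp
    moreover have "src (m x z') = src x" using msrc[OF x that(5) that(4)] .
    ultimately show False using that(1) by simp
  qed
  show ?thesis
  proof (cases rule: push_cases[OF xn x nv])
    case D1: 1
    show ?thesis
    proof (cases rule: push_cases[OF xn x nw])
      case 1 then show ?thesis using D1 eq by simp
    next
      case (2 z' w') then show ?thesis using D1 eq F2[of z' v] nw by simp
    next
      case (3 z' w')
      have "z' \<in> S" "src z' \<noteq> z'" using nw 3 normal_hd by blast+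
      then show ?thesis using D1 eq 3 F1[of z'] by simp
    qed
  next
    case B1: (2 z v')
    have z: "z \<in> S" using nv B1 normal_hd by blast
    show ?thesis
    proof (cases rule: push_cases[OF xn x nw])
      case 1 then show ?thesis using B1 eq F2[of z w] nv by simp
    next
      case (2 z' w')
      have "z' \<in> S" using nw 2 normal_hd by blast
      then have "z = z'" using canc[OF z _ B1(2) 2(2)] B1 2 by simp
      then show ?thesis using B1 2 eq by simp
    next
      case (3 z' w')
      have "z' \<in> S" using nw 3 normal_hd by blast
      then show ?thesis using B1 3 eq F3[of z z' w'] nv by simp
    qed
  next
    case C1: (3 z v')
    have z: "z \<in> S" "src z \<noteq> z" using nv C1 normal_hd by blast+
    show ?thesis
    proof (cases rule: push_cases[OF xn x nw])
      case 1 then show ?thesis using C1 eq F1[OF z(1) C1(2) _ z(2)] by simp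
    next
      case (2 z' w')
      then show ?thesis using C1 eq F3[of z' z v'] nw z by simp
    next
      case (3 z' w')
      have "z' \<in> S" using nw 3 normal_hd by blast
      then have "z = z'" using canc[OF z(1) _ C1(2) 3(2)] C1 3 eq by simp
      then show ?thesis using C1 3 eq by simp
    qed
  qed
qed

lemma foldr_push_normal: "a \<in> lists S \<Longrightarrow> normal S src tgt v \<Longrightarrow> normal S src tgt (foldr (push src tgt m) a v)"
  by (induction a) (auto intro: push_normal)

lemma left_canc_to_umon:
  assumes lc: "cat_left_cancellative S src tgt m"
    and a: "a \<in> lists S" and x: "x \<in> lists S" and y: "y \<in> lists S"
    and e: "umon_eq S src tgt m (a @ x) (a @ y)"
  shows "umon_eq S src tgt m x y"
proof -
  have "foldr (push src tgt m) a (nf src tgt m x) = foldr (push src tgt m) a (nf src tgt m y)"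
    using umon_eq_nf[OF e] by (simp add: nf_append)
  moreover have "normal S src tgt (nf src tgt m x)" "normal S src tgt (nf src tgt m y)"
    using x y nf_normal by auto
  ultimately have "nf src tgt m x = nf src tgt m y"
    using a
  proof (induction a)
    case (Cons s a)
    then show ?case using push_inj[OF lc, of s] foldr_push_normal by auto
  qed simp
  then show ?thesis using umon_eq_iff x y by blast
qed

lemma umon_to_left_canc:
  assumes h: "\<forall>a\<in>lists S. \<forall>x\<in>lists S. \<forall>y\<in>lists S. umon_eq S src tgt m (a @ x) (a @ y) \<longrightarrow> umon_eq S src tgt m x y"
  shows "cat_left_cancellative S src tgt m"
  unfolding cat_left_cancellative_def
proof (intro ballI impI)
  fix a x y assume a: "a \<in> S" and x: "x \<in> S" and y: "y \<in> S"
    and cx: "cat_defined src tgt a x" and cy: "cat_defined src tgt a y" and e: "m a x = m a y"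
  have 1: "umon_eq S src tgt m ([] @ [a, x] @ []) ([] @ [m a x] @ [])"
    using a x cx by (intro umon_eq.mult) auto
  have 2: "umon_eq S src tgt m ([] @ [a, y] @ []) ([] @ [m a y] @ [])"
    using a y cy by (intro umon_eq.mult) auto
  have "umon_eq S src tgt m ([a] @ [x]) ([a] @ [y])"
    using 1 2 e by (auto intro: umon_eq.trans umon_eq.sym)
  then have "umon_eq S src tgt m [x] [y]" using h[rule_format, of "[a]" "[x]" "[y]"] a x y by simp
  then have "push src tgt m x [] = push src tgt m y []"
    using umon_eq_nf[of "[x]" "[y]"] by (simp add: nf_def)
  then have "(if src x = x then [] else [x]) = (if src y = y then [] else [y])"
    unfolding push_def list.case(1) .
  moreover have "src x = src y" using cx cy by (simp add: cat_defined_def)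
  ultimately show "x = y" by (auto split: if_splits)
qed

definition cls where "cls u = umon_rel S src tgt m `` {u}"

lemma cls_eq: "u \<in> lists S \<Longrightarrow> v \<in> lists S \<Longrightarrow> cls u = cls v \<longleftrightarrow> umon_eq S src tgt m u v"
proof
  assume u: "u \<in> lists S" and v: "v \<in> lists S" and e: "cls u = cls v"
  have "v \<in> cls v" using v by (simp add: cls_def umon_rel_def umon_eq.refl)
  then have "v \<in> cls u" using e by simp
  then show "umon_eq S src tgt m u v" by (simp add: cls_def umon_rel_def)
next
  assume "umon_eq S src tgt m u v"
  then show "cls u = cls v"
    unfolding cls_def umon_rel_def by (auto intro: umon_eq.trans umon_eq.sym)
qed

lemma carrier_U: "carrier (Umon S src tgt m) = cls ` lists S"
  by (auto simp: Umon_def quotient_def cls_def)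

lemma one_U: "one (Umon S src tgt m) = cls []"
  by (simp add: Umon_def cls_def)

lemma mult_U: "u \<in> lists S \<Longrightarrow> v \<in> lists S \<Longrightarrow> mult (Umon S src tgt m) (cls u) (cls v) = cls (u @ v)"
proof -
  assume u: "u \<in> lists S" and v: "v \<in> lists S"
  have "u \<in> cls u" "v \<in> cls v" using u v by (simp_all add: cls_def umon_rel_def umon_eq.refl)
  then have a: "(SOME a. a \<in> cls u) \<in> cls u" and b: "(SOME b. b \<in> cls v) \<in> cls v"
    by (metis someI)+
  define a where "a = (SOME a. a \<in> cls u)"
  define b where "b = (SOME b. b \<in> cls v)"
  have ea: "umon_eq S src tgt m u a" and eb: "umon_eq S src tgt m v b"
    using a b by (simp_all add: a_def b_def cls_def umon_rel_def)
  have al: "a \<in> lists S" and bl: "b \<in> lists S" using umon_eq_lists ea eb by auto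
  have "umon_eq S src tgt m ([] @ u @ v) ([] @ a @ v)" using umon_eq_cong[OF ea, of "[]" v] v by simp
  moreover have "umon_eq S src tgt m (a @ v @ []) (a @ b @ [])" using umon_eq_cong[OF eb, of a "[]"] al by simp
  ultimately have "umon_eq S src tgt m (u @ v) (a @ b)" by (auto intro: umon_eq.trans)
  then have "cls (u @ v) = cls (a @ b)" using u v al bl by (simp add: cls_eq)
  then show ?thesis by (simp add: Umon_def cls_def a_def b_def)
qed

lemma monoid_U: "monoid (Umon S src tgt m)"
proof (rule monoidI)
  fix x y assume "x \<in> carrier (Umon S src tgt m)" "y \<in> carrier (Umon S src tgt m)"
  then obtain u v where "u \<in> lists S" "v \<in> lists S" "x = cls u" "y = cls v" by (auto simp: carrier_U)
  then show "x \<otimes>\<^bsub>Umon S src tgt m\<^esub> y \<in> carrier (Umon S src tgt m)"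
    unfolding carrier_U using mult_U[of u v] by (metis append_in_lists_conv image_eqI)
next
  show "\<one>\<^bsub>Umon S src tgt m\<^esub> \<in> carrier (Umon S src tgt m)" by (auto simp: carrier_U one_U)
next
  fix x y z assume "x \<in> carrier (Umon S src tgt m)" "y \<in> carrier (Umon S src tgt m)" "z \<in> carrier (Umon S src tgt m)"
  then obtain u v w where "u \<in> lists S" "v \<in> lists S" "w \<in> lists S" "x = cls u" "y = cls v" "z = cls w"
    by (auto simp: carrier_U)
  then show "x \<otimes>\<^bsub>Umon S src tgt m\<^esub> y \<otimes>\<^bsub>Umon S src tgt m\<^esub> z = x \<otimes>\<^bsub>Umon S src tgt m\<^esub> (y \<otimes>\<^bsub>Umon S src tgt m\<^esub> z)"
    using mult_U[of u v] mult_U[of v w] mult_U[of "u @ v" w] mult_U[of u "v @ w"] by simp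
next
  fix x assume "x \<in> carrier (Umon S src tgt m)"
  then obtain u where "u \<in> lists S" "x = cls u" by (auto simp: carrier_U)
  then show "\<one>\<^bsub>Umon S src tgt m\<^esub> \<otimes>\<^bsub>Umon S src tgt m\<^esub> x = x"
    using mult_U[of "[]" u] by (simp add: one_U)
next
  fix x assume "x \<in> carrier (Umon S src tgt m)"
  then obtain u where "u \<in> lists S" "x = cls u" by (auto simp: carrier_U)
  then show "x \<otimes>\<^bsub>Umon S src tgt m\<^esub> \<one>\<^bsub>Umon S src tgt m\<^esub> = x"
    using mult_U[of u "[]"] by (simp add: one_U)
qed

lemma mlc_iff: "monoid_left_cancellative (Umon S src tgt m) \<longleftrightarrow>
  (\<forall>a\<in>lists S. \<forall>x\<in>lists S. \<forall>y\<in>lists S. umon_eq S src tgt m (a @ x) (a @ y) \<longrightarrow> umon_eq S src tgt m x y)"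
  unfolding monoid_left_cancellative_def carrier_U
  by (auto simp: mult_U cls_eq)

lemma mrc_iff: "monoid_right_cancellative (Umon S src tgt m) \<longleftrightarrow>
  (\<forall>a\<in>lists S. \<forall>x\<in>lists S. \<forall>y\<in>lists S. umon_eq S src tgt m (x @ a) (y @ a) \<longrightarrow> umon_eq S src tgt m x y)"
  unfolding monoid_right_cancellative_def carrier_U
  by (auto simp: mult_U cls_eq)

lemma left_iff: "cat_left_cancellative S src tgt m \<longleftrightarrow> monoid_left_cancellative (Umon S src tgt m)"
  unfolding mlc_iff using left_canc_to_umon umon_to_left_canc by blast

lemma cls_single_unit:
  assumes x: "x \<in> S" and y: "y \<in> S" and c1: "tgt x = src y" and c2: "tgt y = src x"
    and e1: "m x y = src x" and e2: "m y x = tgt x"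
  shows "cls [x] \<in> Units (Umon S src tgt m)"
proof -
  have i1: "umon_eq S src tgt m [x, y] []"
  proof -
    have "umon_eq S src tgt m ([] @ [x, y] @ []) ([] @ [m x y] @ [])"
      using x y c1 by (intro umon_eq.mult) (auto simp: cat_defined_def)
    moreover have "umon_eq S src tgt m ([] @ [src x] @ []) ([] @ [])"
      using x by (intro umon_eq.ident) (auto simp: cat_ids_def ss src_S)
    ultimately show ?thesis using e1 by (auto intro: umon_eq.trans)
  qed
  have i2: "umon_eq S src tgt m [y, x] []"
  proof -
    have "umon_eq S src tgt m ([] @ [y, x] @ []) ([] @ [m y x] @ [])"
      using x y c2 by (intro umon_eq.mult) (auto simp: cat_defined_def)
    moreover have "umon_eq S src tgt m ([] @ [tgt x] @ []) ([] @ [])"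
      using x by (intro umon_eq.ident) (auto simp: cat_ids_def st tgt_S)
    ultimately show ?thesis using e2 by (auto intro: umon_eq.trans)
  qed
  have "cls [x] \<otimes>\<^bsub>Umon S src tgt m\<^esub> cls [y] = \<one>\<^bsub>Umon S src tgt m\<^esub>"
    using mult_U[of "[x]" "[y]"] x y i1 cls_eq[of "[x,y]" "[]"] by (simp add: one_U)
  moreover have "cls [y] \<otimes>\<^bsub>Umon S src tgt m\<^esub> cls [x] = \<one>\<^bsub>Umon S src tgt m\<^esub>"
    using mult_U[of "[y]" "[x]"] x y i2 cls_eq[of "[y,x]" "[]"] by (simp add: one_U)
  moreover have "cls [x] \<in> carrier (Umon S src tgt m)" "cls [y] \<in> carrier (Umon S src tgt m)"
    using x y by (auto simp: carrier_U)
  ultimately show ?thesis unfolding Units_def by blast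
qed

lemma groupoid_group: "groupoid S src tgt m \<Longrightarrow> group (Umon S src tgt m)"
proof -
  assume g: "groupoid S src tgt m"
  interpret M: monoid "Umon S src tgt m" by (rule monoid_U)
  have "cls u \<in> Units (Umon S src tgt m)" if "u \<in> lists S" for u
    using that
  proof (induction u)
    case Nil then show ?case using one_U M.Units_one_closed by simp
  next
    case (Cons x u)
    then have x: "x \<in> S" by simp
    then obtain y where "y \<in> S" "tgt x = src y" "tgt y = src x" "m x y = src x" "m y x = tgt x"
      using g unfolding groupoid_def cat_defined_def by blast
    then have "cls [x] \<in> Units (Umon S src tgt m)" using cls_single_unit x by blast
    then have "cls [x] \<otimes>\<^bsub>Umon S src tgt m\<^esub> cls u \<in> Units (Umon S src tgt m)"
      using Cons by (intro M.Units_m_closed) auto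
    moreover have "cls [x] \<otimes>\<^bsub>Umon S src tgt m\<^esub> cls u = cls (x # u)" using mult_U[of "[x]" u] Cons by simp
    ultimately show ?case by simp
  qed
  then have "carrier (Umon S src tgt m) \<subseteq> Units (Umon S src tgt m)" by (auto simp: carrier_U)
  then show ?thesis by (intro group.intro monoid_U) (simp add: group_axioms_def)
qed

lemma nf_single: "src z \<noteq> z \<Longrightarrow> nf src tgt m [z] = [z]"
  by (simp add: nf_def push_def)

lemma group_groupoid: "group (Umon S src tgt m) \<Longrightarrow> groupoid S src tgt m"
  unfolding groupoid_def
proof (intro conjI ballI)
  assume G: "group (Umon S src tgt m)"
  show "category S src tgt m" by (rule cat)
  fix x assume x: "x \<in> S"
  show "\<exists>y\<in>S. cat_defined src tgt x y \<and> cat_defined src tgt y x \<and> m x y = src x \<and> m y x = tgt x"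
  proof (cases "src x = x")
    case True
    then show ?thesis using x id_tgt[OF x True] id_l[OF x True x]
      by (intro bexI[of _ x]) (auto simp: cat_defined_def)
  next
    case xn: False
    interpret Gr: group "Umon S src tgt m" by (rule G)
    have "cls [x] \<in> carrier (Umon S src tgt m)" using x by (auto simp: carrier_U)
    then have "cls [x] \<in> Units (Umon S src tgt m)" using Gr.Units by blast
    then obtain W where W: "W \<in> carrier (Umon S src tgt m)"
      "cls [x] \<otimes>\<^bsub>Umon S src tgt m\<^esub> W = \<one>\<^bsub>Umon S src tgt m\<^esub>"
      "W \<otimes>\<^bsub>Umon S src tgt m\<^esub> cls [x] = \<one>\<^bsub>Umon S src tgt m\<^esub>"
      unfolding Units_def by blast
    then obtain w where w: "w \<in> lists S" "W = cls w" by (auto simp: carrier_U)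
    have e1: "umon_eq S src tgt m ([x] @ w) []" using W w x mult_U[of "[x]" w] cls_eq[of "[x] @ w" "[]"]
      by (simp add: one_U)
    have e2: "umon_eq S src tgt m (w @ [x]) []" using W w x mult_U[of w "[x]"] cls_eq[of "w @ [x]" "[]"]
      by (simp add: one_U)
    have p: "push src tgt m x (nf src tgt m w) = []" using umon_eq_nf[OF e1] by (simp add: nf_def)
    have nw: "normal S src tgt (nf src tgt m w)" using nf_normal w by blast
    show ?thesis
    proof (cases rule: push_cases[OF xn x nw])
      case 1 then show ?thesis using p by simp
    next
      case (3 z v') then show ?thesis using p by simp
    next
      case (2 z v')
      then have nfw: "nf src tgt m w = [z]" using p by simp
      have z: "z \<in> S" "src z \<noteq> z" using nw nfw by simp_all
      have "umon_eq S src tgt m w [z]" using umon_eq_iff[of w "[z]"] w z nfw nf_single by simp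
      then have "umon_eq S src tgt m ([] @ w @ [x]) ([] @ [z] @ [x])" using x by (intro umon_eq_cong) auto
      then have "umon_eq S src tgt m [z, x] (w @ [x])" by (simp add: umon_eq.sym)
      then have "umon_eq S src tgt m [z, x] []" using e2 by (rule umon_eq.trans)
      then have pz: "push src tgt m z (push src tgt m x []) = []" using umon_eq_nf[of "[z, x]" "[]"] by (simp add: nf_def)
      have px: "push src tgt m x [] = [x]" using xn by (simp add: push_def)
      have nx: "normal S src tgt [x]" using x xn by simp
      show ?thesis
      proof (cases rule: push_cases[OF z(2) z(1) nx])
        case 1 then show ?thesis using pz px by simp
      next
        case (3 z' v'') then show ?thesis using pz px by simp
      next
        case (2 z' v'')
        have zx: "z' = x" using 2(1) by simp
        have a1: "tgt z = src x" using 2(2) zx by simp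
        have a2: "m z x = tgt x" using 2(3) zx \<open>tgt x = src z\<close> by simp
        have "cat_defined src tgt x z \<and> cat_defined src tgt z x \<and> m x z = src x \<and> m z x = tgt x"
          using a1 a2 \<open>tgt x = src z\<close> \<open>m x z = src x\<close> unfolding cat_defined_def by simp
        then show ?thesis using z(1) by blast
      qed
    qed
  qed
qed

end

lemma category_op: "category S src tgt m \<Longrightarrow> category S tgt src (\<lambda>x y. m y x)"
  unfolding category_def by auto

lemma umon_eq_op: assumes c: "category S src tgt m" and e: "umon_eq S src tgt m u v" shows
   "umon_eq S tgt src (\<lambda>x y. m y x) (rev u) (rev v)"
  using e
proof (induction rule: umon_eq.induct)
  case (refl u) then show ?case by (intro umon_eq.refl) auto
next
  case (sym u v) then show ?case by (simp add: umon_eq.sym)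
next
  case (trans u v w) then show ?case by (meson umon_eq.trans)
next
  case (ident p q e)
  have "tgt e = e" using ident id_tgt[OF c] by (auto simp: cat_ids_def)
  then have "umon_eq S tgt src (\<lambda>x y. m y x) (rev q @ [e] @ rev p) (rev q @ rev p)"
    using ident by (intro umon_eq.ident) (auto simp: cat_ids_def)
  then show ?case by simp
next
  case (mult p q x y)
  have "umon_eq S tgt src (\<lambda>x y. m y x) (rev q @ [y, x] @ rev p) (rev q @ [(\<lambda>x y. m y x) y x] @ rev p)"
    using mult by (intro umon_eq.mult) (auto simp: cat_defined_def)
  then show ?case by simp
qed

lemma umon_eq_op_iff: "category S src tgt m \<Longrightarrow>
   umon_eq S tgt src (\<lambda>x y. m y x) u v \<longleftrightarrow> umon_eq S src tgt m (rev u) (rev v)"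
proof
  assume c: "category S src tgt m" and "umon_eq S tgt src (\<lambda>x y. m y x) u v"
  then show "umon_eq S src tgt m (rev u) (rev v)"
    using umon_eq_op[OF category_op[OF c]] by simp
next
  assume c: "category S src tgt m" and "umon_eq S src tgt m (rev u) (rev v)"
  then show "umon_eq S tgt src (\<lambda>x y. m y x) u v"
    using umon_eq_op[OF c, of "rev u" "rev v"] by simp
qed

lemma right_op: "cat_right_cancellative S src tgt m \<longleftrightarrow> cat_left_cancellative S tgt src (\<lambda>x y. m y x)"
  unfolding cat_right_cancellative_def cat_left_cancellative_def cat_defined_def by metis

theorem corollary4p3:
  assumes "category S src tgt m"
  shows "(cat_left_cancellative S src tgt m \<longleftrightarrow> monoid_left_cancellative (Umon S src tgt m))
       \<and> (cat_right_cancellative S src tgt m \<longleftrightarrow> monoid_right_cancellative (Umon S src tgt m))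
       \<and> (groupoid S src tgt m \<longleftrightarrow> group (Umon S src tgt m))"
proof (intro conjI)
  note c = assms
  note co = category_op[OF assms]
  show "cat_left_cancellative S src tgt m \<longleftrightarrow> monoid_left_cancellative (Umon S src tgt m)"
    by (rule left_iff[OF c])
  show "groupoid S src tgt m \<longleftrightarrow> group (Umon S src tgt m)"
    using groupoid_group[OF c] group_groupoid[OF c] by blast
  have "cat_right_cancellative S src tgt m \<longleftrightarrow>
    (\<forall>a\<in>lists S. \<forall>x\<in>lists S. \<forall>y\<in>lists S. umon_eq S tgt src (\<lambda>x y. m y x) (a @ x) (a @ y) \<longrightarrow> umon_eq S tgt src (\<lambda>x y. m y x) x y)"
    unfolding right_op using left_canc_to_umon[OF co] umon_to_left_canc[OF co] by blast
  also have "\<dots> \<longleftrightarrow> (\<forall>a\<in>lists S. \<forall>x\<in>lists S. \<forall>y\<in>lists S. umon_eq S src tgt m (x @ a) (y @ a) \<longrightarrow> umon_eq S src tgt m x y)"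
  proof
    assume h: "\<forall>a\<in>lists S. \<forall>x\<in>lists S. \<forall>y\<in>lists S. umon_eq S tgt src (\<lambda>x y. m y x) (a @ x) (a @ y) \<longrightarrow> umon_eq S tgt src (\<lambda>x y. m y x) x y"
    show "\<forall>a\<in>lists S. \<forall>x\<in>lists S. \<forall>y\<in>lists S. umon_eq S src tgt m (x @ a) (y @ a) \<longrightarrow> umon_eq S src tgt m x y"
    proof (intro ballI impI)
      fix a x y assume l: "a \<in> lists S" "x \<in> lists S" "y \<in> lists S" and e: "umon_eq S src tgt m (x @ a) (y @ a)"
      have "umon_eq S tgt src (\<lambda>x y. m y x) (rev a @ rev x) (rev a @ rev y)"
        using e umon_eq_op_iff[OF c, of "rev a @ rev x" "rev a @ rev y"] by simp
      then have "umon_eq S tgt src (\<lambda>x y. m y x) (rev x) (rev y)" using h[rule_format, of "rev a" "rev x" "rev y"] l by (simp add: in_lists_conv_set)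
      then show "umon_eq S src tgt m x y" using umon_eq_op_iff[OF c, of "rev x" "rev y"] by simp
    qed
  next
    assume h: "\<forall>a\<in>lists S. \<forall>x\<in>lists S. \<forall>y\<in>lists S. umon_eq S src tgt m (x @ a) (y @ a) \<longrightarrow> umon_eq S src tgt m x y"
    show "\<forall>a\<in>lists S. \<forall>x\<in>lists S. \<forall>y\<in>lists S. umon_eq S tgt src (\<lambda>x y. m y x) (a @ x) (a @ y) \<longrightarrow> umon_eq S tgt src (\<lambda>x y. m y x) x y"
    proof (intro ballI impI)
      fix a x y assume l: "a \<in> lists S" "x \<in> lists S" "y \<in> lists S" and e: "umon_eq S tgt src (\<lambda>x y. m y x) (a @ x) (a @ y)"
      have "umon_eq S src tgt m (rev x @ rev a) (rev y @ rev a)"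
        using e umon_eq_op_iff[OF c, of "a @ x" "a @ y"] by simp
      then have "umon_eq S src tgt m (rev x) (rev y)" using h[rule_format, of "rev a" "rev x" "rev y"] l by (simp add: in_lists_conv_set)
      then show "umon_eq S tgt src (\<lambda>x y. m y x) x y" using umon_eq_op_iff[OF c, of x y] by simp
    qed
  qed
  also have "\<dots> \<longleftrightarrow> monoid_right_cancellative (Umon S src tgt m)"
    using mrc_iff[OF c] by simp
  finally show "cat_right_cancellative S src tgt m \<longleftrightarrow> monoid_right_cancellative (Umon S src tgt m)" .
qed

end
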